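(* Let $F\in[0,1]$ and $0\le p\le F$, and let $F'_{\min}(p,F)=\min\{F'_{00}(\rho_1\otimes\rho_2):\rho_1,\rho_2\in S_{p,F}\}$. Then $$F'_{\min}(p,F)\ge\frac{p(2F-p)}{1+(1-p)^2}.$$
   Context: For qubit registers $(R,T)$, $|\Psi_{ij}\rangle_{RT}=(I_R\otimes(X^iZ^j)_T)\tfrac1{\sqrt2}(|00\rangle+|11\rangle)$. $S_{p,F}$ is the set of two-qubit density operators $\rho$ with $\rho=p|\Psi_{00}\rangle\langle\Psi_{00}|+(1-p)\sigma$ for some density operator $\sigma$ and $\langle\Psi_{00}|\rho|\Psi_{00}\rangle=F$. For $\rho_1$ on $(A_1,B_1)$ and $\rho_2$ on $(A_2,B_2)$: $p'_{ij}(\rho_1\otimes\rho_2)=\mathrm{Tr}[|\Psi_{ij}\rangle\langle\Psi_{ij}|_{A_1A_2}\rho_1\otimes\rho_2]$ is the probability of Bell-state measurement outcome $ij$ on $(A_1,A_2)$, and $F'_{ij}(\rho_1\otimes\rho_2)=\frac1{p'_{ij}}\mathrm{Tr}[|\Psi_{ij}\rangle\langle\Psi_{ij}|_{B_1B_2}|\Psi_{ij}\rangle\langle\Psi_{ij}|_{A_1A_2}\rho_1\otimes\rho_2]$ is the postselected end-to-end fidelity. *)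

theory Defs
  imports Complex_Main
begin

text \<open>Qubit basis indexed by bool (False = 0, True = 1). A two-qubit register pair (R,T)
  has basis index (r,t) :: bool \<times> bool. Operators are functions row \<Rightarrow> col \<Rightarrow> complex.\<close>

type_synonym 'i op = "'i \<Rightarrow> 'i \<Rightarrow> complex"
type_synonym 'i ket = "'i \<Rightarrow> complex"

definition mmul :: "('i::finite) op \<Rightarrow> 'i op \<Rightarrow> 'i op" where
  "mmul A B = (\<lambda>x y. \<Sum>z\<in>UNIV. A x z * B z y)"

definition idop :: "'i op" where
  "idop = (\<lambda>x y. if x = y then 1 else 0)"

definition trace_op :: "('i::finite) op \<Rightarrow> complex" where
  "trace_op A = (\<Sum>x\<in>UNIV. A x x)"

definition pauliX :: "bool op" where
  "pauliX = (\<lambda>x y. if x \<noteq> y then 1 else 0)"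

definition pauliZ :: "bool op" where
  "pauliZ = (\<lambda>x y. if x = y then (if x then -1 else 1) else 0)"

definition pauli :: "bool \<Rightarrow> bool \<Rightarrow> bool op" where
  "pauli i j = mmul (if i then pauliX else idop) (if j then pauliZ else idop)"

definition phi_plus :: "(bool \<times> bool) ket" where
  "phi_plus = (\<lambda>(r,t). if r = t then complex_of_real (1 / sqrt 2) else 0)"

definition bell :: "bool \<Rightarrow> bool \<Rightarrow> (bool \<times> bool) ket" where
  "bell i j = (\<lambda>(r,t). \<Sum>t'\<in>UNIV. pauli i j t t' * phi_plus (r,t'))"

definition proj :: "'i ket \<Rightarrow> 'i op" where
  "proj v = (\<lambda>x y. v x * cnj (v y))"

definition expect :: "('i::finite) ket \<Rightarrow> 'i op \<Rightarrow> complex" where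
  "expect v A = (\<Sum>x\<in>UNIV. \<Sum>y\<in>UNIV. cnj (v x) * A x y * v y)"

definition density_op :: "('i::finite) op \<Rightarrow> bool" where
  "density_op \<rho> \<longleftrightarrow> (\<forall>x y. \<rho> x y = cnj (\<rho> y x))
     \<and> (\<forall>v. Im (expect v \<rho>) = 0 \<and> Re (expect v \<rho>) \<ge> 0)
     \<and> trace_op \<rho> = 1"

definition S_set :: "real \<Rightarrow> real \<Rightarrow> (bool \<times> bool) op set" where
  "S_set p F = {\<rho>. density_op \<rho>
      \<and> (\<exists>\<sigma>. density_op \<sigma> \<and>
            \<rho> = (\<lambda>x y. complex_of_real p * proj (bell False False) x y
                        + complex_of_real (1 - p) * \<sigma> x y))
      \<and> expect (bell False False) \<rho> = complex_of_real F}"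

text \<open>Four-register system indexed ((a1,b1),(a2,b2)) for registers (A1,B1,A2,B2).\<close>
type_synonym idx4 = "(bool \<times> bool) \<times> (bool \<times> bool)"

definition tensor :: "(bool \<times> bool) op \<Rightarrow> (bool \<times> bool) op \<Rightarrow> idx4 op" where
  "tensor \<rho>1 \<rho>2 = (\<lambda>(x1,x2) (y1,y2). \<rho>1 x1 y1 * \<rho>2 x2 y2)"

definition on_A :: "(bool \<times> bool) op \<Rightarrow> idx4 op" where
  "on_A P = (\<lambda>((a1,b1),(a2,b2)) ((a1',b1'),(a2',b2')).
      P (a1,a2) (a1',a2') * (if b1 = b1' \<and> b2 = b2' then 1 else 0))"

definition on_B :: "(bool \<times> bool) op \<Rightarrow> idx4 op" where
  "on_B P = (\<lambda>((a1,b1),(a2,b2)) ((a1',b1'),(a2',b2')).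
      P (b1,b2) (b1',b2') * (if a1 = a1' \<and> a2 = a2' then 1 else 0))"

definition p_out :: "bool \<Rightarrow> bool \<Rightarrow> (bool \<times> bool) op \<Rightarrow> (bool \<times> bool) op \<Rightarrow> real" where
  "p_out i j \<rho>1 \<rho>2 = Re (trace_op (mmul (on_A (proj (bell i j))) (tensor \<rho>1 \<rho>2)))"

definition F_out :: "bool \<Rightarrow> bool \<Rightarrow> (bool \<times> bool) op \<Rightarrow> (bool \<times> bool) op \<Rightarrow> real" where
  "F_out i j \<rho>1 \<rho>2 = Re (trace_op (mmul (on_B (proj (bell i j)))
        (mmul (on_A (proj (bell i j))) (tensor \<rho>1 \<rho>2)))) / p_out i j \<rho>1 \<rho>2"

end

theory Submission
  imports Defs
begin


definition herm :: "('i::finite) op \<Rightarrow> bool" where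
  "herm A \<longleftrightarrow> (\<forall>x y. A x y = cnj (A y x))"
definition psd :: "('i::finite) op \<Rightarrow> bool" where
  "psd A \<longleftrightarrow> herm A \<and> (\<forall>v. Im (expect v A) = 0 \<and> 0 \<le> Re (expect v A))"
definition bf :: "('i::finite) op \<Rightarrow> 'i op \<Rightarrow> complex" where
  "bf A B = (\<Sum>x\<in>UNIV. \<Sum>y\<in>UNIV. A x y * B x y)"

lemma mult_if0: "(a::complex) * (if P then b else 0) = (if P then a * b else 0)"
  "(if P then b else 0) * (a::complex) = (if P then b * a else 0)"
  "cnj (if P then b else 0) = (if P then cnj b else 0)"
  by auto

lemma expect_two:
  fixes A :: "('i::finite) op"
  assumes "x \<noteq> y"
  shows "expect (\<lambda>z. (if z = x then t else 0) + (if z = y then u else 0)) A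
     = cnj t * A x x * t + cnj t * A x y * u + cnj u * A y x * t + cnj u * A y y * u"
  using assms
  by (simp add: expect_def ring_distribs sum.distrib mult_if0 sum.delta)



lemma psd_herm: "psd A \<Longrightarrow> A x y = cnj (A y x)" unfolding psd_def herm_def by blast
lemma psd_pos: "psd A \<Longrightarrow> 0 \<le> Re (expect v A)" unfolding psd_def by blast
lemma psd_im: "psd A \<Longrightarrow> Im (expect v A) = 0" unfolding psd_def by blast

lemma zero_row:
  fixes A :: "('i::finite) op"
  assumes P: "psd A" and z: "A x x = 0"
  shows "A x y = 0"
proof (cases "y = x")
  case True then show ?thesis using z by simp
next
  case False
  define c where "c = A x y"
  have yx: "A y x = cnj c" using psd_herm[OF P, of y x] c_def by simp
  have key: "0 \<le> Re (A y y) - 2 * R * (cmod c)^2" for R :: real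
  proof -
    let ?t = "- c * of_real R"
    have "0 \<le> Re (expect (\<lambda>z. (if z = x then ?t else 0) + (if z = y then 1 else 0)) A)"
      using P by (rule psd_pos)
    also have "expect (\<lambda>z. (if z = x then ?t else 0) + (if z = y then 1 else 0)) A
        = cnj ?t * A x x * ?t + cnj ?t * A x y * 1 + cnj 1 * A y x * ?t + cnj 1 * A y y * 1"
      using False by (intro expect_two) auto
    also have "\<dots> = A y y - of_real (2 * R) * (cnj c * c)"
      using z yx c_def by (simp add: algebra_simps)
    finally have "0 \<le> Re (A y y - of_real (2 * R) * (cnj c * c))" .
    moreover have "Re (cnj c * c) = (cmod c)^2" by (simp add: cmod_power2 flip: power2_eq_square)
    ultimately show ?thesis by simp
  qed
  show ?thesis
  proof (rule ccontr)
    assume "A x y \<noteq> 0"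
    then have cp: "(cmod c)^2 > 0" using c_def by simp
    have "0 \<le> Re (A y y) - 2 * ((Re (A y y) + 1) / (2 * (cmod c)^2)) * (cmod c)^2"
      by (rule key)
    also have "\<dots> = -1" using cp by (simp add: field_simps)
    finally show False by simp
  qed
qed



lemma expect_alt: "expect v A = (\<Sum>x\<in>UNIV. cnj (v x) * (\<Sum>y\<in>UNIV. A x y * v y))"
  by (simp add: expect_def sum_distrib_left mult.assoc)

lemma expect_shift:
  fixes A :: "('i::finite) op"
  assumes H: "herm A" and a: "A x0 x0 = complex_of_real r" and r: "r \<noteq> 0"
  shows "expect w (\<lambda>x y. A x y - A x x0 * A x0 y / A x0 x0)
       = expect (\<lambda>z. w z + (if z = x0 then - (\<Sum>y\<in>UNIV. A x0 y * w y) / A x0 x0 else 0)) A"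
proof -
  define c where "c = (\<Sum>y\<in>UNIV. A x0 y * w y)"
  define E where "E = expect w A"
  define s where "s = - c / A x0 x0"
  have d: "(\<Sum>x\<in>UNIV. cnj (w x) * A x x0) = cnj c"
  proof -
    have "(\<Sum>x\<in>UNIV. cnj (w x) * A x x0) = (\<Sum>x\<in>UNIV. cnj (A x0 x * w x))"
    proof (rule sum.cong)
      fix x
      have "A x x0 = cnj (A x0 x)" using H unfolding herm_def by blast
      then show "cnj (w x) * A x x0 = cnj (A x0 x * w x)" by (simp add: mult.commute)
    qed simp
    then show ?thesis by (simp add: c_def)
  qed
  have cs: "cnj s = - cnj c / A x0 x0" using a by (simp add: s_def)
  have "expect w (\<lambda>x y. A x y - A x x0 * A x0 y / A x0 x0)
      = (\<Sum>x\<in>UNIV. cnj (w x) * (\<Sum>y\<in>UNIV. A x y * w y))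
        - (\<Sum>x\<in>UNIV. cnj (w x) * A x x0) * c / A x0 x0"
    by (simp add: expect_def c_def algebra_simps sum_subtractf sum_distrib_left sum_distrib_right sum_divide_distrib)
  also have "\<dots> = E - cnj c * c / A x0 x0"
    by (simp add: d E_def expect_def sum_distrib_left mult.assoc)
  finally have L: "expect w (\<lambda>x y. A x y - A x x0 * A x0 y / A x0 x0) = E - cnj c * c / A x0 x0" .
  have inner: "(\<Sum>y\<in>UNIV. A x y * (w y + (if y = x0 then s else 0))) = (\<Sum>y\<in>UNIV. A x y * w y) + A x x0 * s" for x
    by (simp add: ring_distribs sum.distrib mult_if0 sum.delta)
  have "expect (\<lambda>z. w z + (if z = x0 then s else 0)) A
      = (\<Sum>x\<in>UNIV. cnj (w x + (if x = x0 then s else 0)) * ((\<Sum>y\<in>UNIV. A x y * w y) + A x x0 * s))"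
    by (simp only: expect_alt inner)
  also have "\<dots> = (\<Sum>x\<in>UNIV. cnj (w x) * (\<Sum>y\<in>UNIV. A x y * w y)) + (\<Sum>x\<in>UNIV. cnj (w x) * A x x0) * s
       + cnj s * c + cnj s * A x0 x0 * s"
    by (simp add: ring_distribs sum.distrib mult_if0 sum.delta c_def mult.assoc sum_distrib_left[symmetric] sum_distrib_right[symmetric]) (simp add: sum_distrib_right mult.assoc)
  also have "\<dots> = E + cnj c * s + cnj s * c + cnj s * A x0 x0 * s"
    by (simp only: d expect_alt[symmetric] E_def[symmetric])
  also have "\<dots> = E - cnj c * c / A x0 x0"
    using a r by (simp add: cs s_def field_simps)
  finally have R: "expect (\<lambda>z. w z + (if z = x0 then s else 0)) A = E - cnj c * c / A x0 x0" .
  show ?thesis using L[unfolded c_def] R[unfolded s_def c_def] by metis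
qed



lemma expect_delta: "expect (\<lambda>z. if z = x0 then 1 else 0) (A::('i::finite) op) = A x0 x0"
  by (simp add: expect_def mult_if0 sum.delta)

lemma bf_psd_aux:
  fixes B :: "('i::finite) op"
  assumes PB: "psd B"
  shows "finite S \<Longrightarrow> psd A \<Longrightarrow> (\<forall>x y. x \<notin> S \<longrightarrow> A x y = 0) \<Longrightarrow> 0 \<le> Re (bf A B)"
proof (induction S arbitrary: A rule: finite_induct)
  case empty
  then have "A = (\<lambda>x y. 0)" by auto
  then show ?case by (simp add: bf_def)
next
  case (insert x0 S)
  note PA = insert.prems(1)
  have hA: "A x y = cnj (A y x)" for x y using psd_herm[OF PA] .
  have HA: "herm A" using PA unfolding psd_def by blast
  have h2: "cnj (A x0 x) = A x x0" for x using hA[of x x0] by simp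
  show ?case
  proof (cases "A x0 x0 = 0")
    case True
    have "\<forall>x y. x \<notin> S \<longrightarrow> A x y = 0"
    proof (intro allI impI)
      fix x y assume "x \<notin> S"
      show "A x y = 0"
      proof (cases "x = x0")
        case True then show ?thesis using zero_row[OF PA] \<open>A x0 x0 = 0\<close> by simp
      next
        case False then show ?thesis using insert.prems(2) \<open>x \<notin> S\<close> by simp
      qed
    qed
    then show ?thesis using insert.IH PA by blast
  next
    case False
    define r where "r = Re (A x0 x0)"
    have im: "Im (A x0 x0) = 0" using psd_im[OF PA, of "\<lambda>z. if z = x0 then 1 else 0"]
      by (simp add: expect_delta)
    have ar: "A x0 x0 = complex_of_real r" using im r_def by (simp add: complex_eq_iff)
    have "r \<ge> 0" using psd_pos[OF PA, of "\<lambda>z. if z = x0 then 1 else 0"] r_def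
      by (simp add: expect_delta)
    moreover have "r \<noteq> 0" using False ar by auto
    ultimately have rpos: "r > 0" by simp
    define A' where "A' = (\<lambda>x y. A x y - A x x0 * A x0 y / A x0 x0)"
    have hA': "herm A'"
      unfolding herm_def A'_def
    proof (intro allI)
      fix x y
      show "A x y - A x x0 * A x0 y / A x0 x0 = cnj (A y x - A y x0 * A x0 x / A x0 x0)"
        using hA[of x y] hA[of y x0] hA[of x0 x] ar by (simp add: mult.commute)
    qed
    have "psd A'"
      unfolding psd_def
    proof (intro conjI allI hA')
      fix w
      have e: "expect w A' = expect (\<lambda>z. w z + (if z = x0 then - (\<Sum>y\<in>UNIV. A x0 y * w y) / A x0 x0 else 0)) A"
        unfolding A'_def
        using expect_shift[of A x0 r w] ar \<open>r \<noteq> 0\<close> HA by blast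
      show "Im (expect w A') = 0" unfolding e by (rule psd_im[OF PA])
      show "0 \<le> Re (expect w A')" unfolding e by (rule psd_pos[OF PA])
    qed
    moreover have "\<forall>x y. x \<notin> S \<longrightarrow> A' x y = 0"
    proof (intro allI impI)
      fix x y assume "x \<notin> S"
      show "A' x y = 0"
      proof (cases "x = x0")
        case True then show ?thesis using False by (simp add: A'_def)
      next
        case False then show ?thesis using insert.prems(2) \<open>x \<notin> S\<close> by (simp add: A'_def)
      qed
    qed
    ultimately have IH: "0 \<le> Re (bf A' B)" using insert.IH by blast
    define w where "w = (\<lambda>y. A x0 y)"
    have "bf A B = bf A' B + expect w B / A x0 x0"
      unfolding bf_def A'_def expect_def w_def
      by (simp add: algebra_simps sum_subtractf sum.distrib sum_divide_distrib h2)
    moreover have "0 \<le> Re (expect w B / A x0 x0)"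
      using psd_pos[OF PB, of w] rpos ar by simp
    ultimately show ?thesis using IH by simp
  qed
qed

lemma bf_psd: "psd (A::('i::finite) op) \<Longrightarrow> psd B \<Longrightarrow> 0 \<le> Re (bf A B)"
  using bf_psd_aux[of B UNIV A] by simp



lemma UNIV_bb: "(UNIV::(bool\<times>bool) set) = {(False,False),(False,True),(True,False),(True,True)}"
  by auto
lemma sum_bb: "(\<Sum>x\<in>(UNIV::(bool\<times>bool) set). f x) = f (False,False) + f (False,True) + f (True,False) + f (True,True)"
  by (simp add: UNIV_bb add.assoc)
lemma sum_b: "(\<Sum>x\<in>(UNIV::bool set). f x) = f False + f True"
  by (simp add: UNIV_bool add.commute)
lemma sum_idx4: "(\<Sum>x\<in>(UNIV::idx4 set). f x) = (\<Sum>x1\<in>UNIV. \<Sum>x2\<in>UNIV. f (x1,x2))"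
  by (simp add: sum.cartesian_product UNIV_Times_UNIV[symmetric] del: UNIV_Times_UNIV)

definition P0 :: "(bool\<times>bool) op" where
  "P0 = (\<lambda>x y. if fst x = snd x \<and> fst y = snd y then 1/2 else 0)"

lemma bell00: "bell False False = (\<lambda>x. if fst x = snd x then complex_of_real (1 / sqrt 2) else 0)"
  by (rule ext) (auto simp: bell_def pauli_def mmul_def idop_def phi_plus_def sum_b)

lemma proj00: "proj (bell False False) = P0"
proof -
  have "complex_of_real (1 / sqrt 2) * complex_of_real (1 / sqrt 2) = 1/2"
    by (simp flip: of_real_mult)
  then show ?thesis by (auto simp: proj_def bell00 P0_def fun_eq_iff)
qed



lemma onA_mul: "mmul (on_A P0) T ((c1,d1),(c2,d2)) y
   = (if c1 = c2 then (T ((False,d1),(False,d2)) y + T ((True,d1),(True,d2)) y)/2 else 0)"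
  by (cases c1; cases c2; cases d1; cases d2) (simp_all add: mmul_def sum_idx4 sum_bb on_A_def P0_def)

definition ptr :: "(bool\<times>bool) op \<Rightarrow> bool op" where
  "ptr r = (\<lambda>a a'. \<Sum>b\<in>UNIV. r (a,b) (a',b))"

lemma D_c: "trace_op (mmul (on_A P0) (tensor r1 r2)) = bf (ptr r1) (ptr r2) / 2"
  unfolding trace_op_def sum_idx4 sum_bb onA_mul
  by (simp add: bf_def ptr_def sum_b sum_bb tensor_def algebra_simps add_divide_distrib)

lemma D_formula: "p_out False False r1 r2 = Re (bf (ptr r1) (ptr r2)) / 2"
  unfolding p_out_def proj00 D_c by simp

lemma N_c: "trace_op (mmul (on_B P0) (mmul (on_A P0) (tensor r1 r2))) = bf r1 r2 / 4"
  unfolding trace_op_def mmul_def[of "on_B P0"] sum_idx4 sum_bb onA_mul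
  by (simp add: bf_def on_B_def P0_def sum_bb tensor_def algebra_simps add_divide_distrib)



lemma bf_lin: "bf (\<lambda>x y. a * A x y + b * C x y) B = a * bf A B + b * bf C B"
  by (simp add: bf_def algebra_simps sum.distrib sum_distrib_left)
lemma bf_comm: "bf A B = bf B A"
  by (simp add: bf_def mult.commute)
lemma bf_P0: "bf P0 r = expect (bell False False) r"
proof -
  have h: "cnj (complex_of_real (1 / sqrt 2)) * complex_of_real (1 / sqrt 2) = 1/2"
    by (simp flip: of_real_mult)
  have h2: "complex_of_real (sqrt 2) * complex_of_real (sqrt 2) = 2"
    by (simp flip: of_real_mult)
  show ?thesis
    by (simp add: bf_def expect_def bell00 P0_def sum_bb algebra_simps h h2)
qed
lemma bf_P0P0: "bf P0 P0 = 1"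
  by (simp add: bf_def P0_def sum_bb)
lemma ptr_lin: "ptr (\<lambda>x y. a * A x y + b * C x y) = (\<lambda>u v. a * ptr A u v + b * ptr C u v)"
  by (simp add: ptr_def fun_eq_iff sum.distrib sum_distrib_left)
lemma bf_ptrP0: "bf (ptr P0) X = trace_op X / 2"
  by (simp add: bf_def ptr_def P0_def sum_b trace_op_def add_divide_distrib)
lemma trace_ptr: "trace_op (ptr r) = trace_op r"
  by (simp add: ptr_def trace_op_def sum_b sum_bb algebra_simps)

lemma density_psd: "density_op r \<Longrightarrow> psd r"
  unfolding density_op_def psd_def herm_def by blast

lemma psd_ptr: assumes "psd r" shows "psd (ptr r)"
proof -
  have h: "r x y = cnj (r y x)" for x y using psd_herm[OF assms] .
  have "herm (ptr r)" unfolding herm_def ptr_def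
    by (simp add: sum_b) (metis h)
  moreover have "expect w (ptr r) = expect (\<lambda>(a,b). if b then 0 else w a) r + expect (\<lambda>(a,b). if b then w a else 0) r" for w
    by (simp add: expect_def ptr_def sum_b sum_bb algebra_simps)
  ultimately show ?thesis using psd_pos[OF assms] psd_im[OF assms]
    unfolding psd_def by (simp add: add_nonneg_nonneg)
qed

lemma psd_compl: assumes "psd (t::bool op)" and "trace_op t = 1"
  shows "psd (\<lambda>a a'. idop a a' - t a a')"
proof -
  have h: "t x y = cnj (t y x)" for x y using psd_herm[OF assms(1)] .
  have "herm (\<lambda>a a'. idop a a' - t a a')" unfolding herm_def
  proof (intro allI)
    fix x y show "idop x y - t x y = cnj (idop y x - t y x)" using h[of x y] by (simp add: idop_def)
  qed
  moreover have "expect w (\<lambda>a a'. idop a a' - t a a') = expect (\<lambda>a. if a then - cnj (w False) else cnj (w True)) t" for w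
  proof -
    have tt: "t True True = 1 - t False False" using assms(2) by (simp add: trace_op_def sum_b eq_diff_eq add.commute)
    show ?thesis by (simp add: expect_def idop_def sum_b algebra_simps tt)
  qed
  ultimately show ?thesis using psd_pos[OF assms(1)] psd_im[OF assms(1)]
    unfolding psd_def by simp
qed

lemma bf_compl: "bf (\<lambda>a a'. idop a a' - (t::bool op) a a') X = trace_op X - bf t X"
  by (simp add: bf_def idop_def sum_b trace_op_def algebra_simps)



lemma div4: "(a/4)/(b/4) = a/(b::real)" by (cases "b=0") (simp_all add: field_simps)

lemma final_ineq:
  fixes p F s t :: real
  assumes "0 \<le> F" "F \<le> 1" "0 \<le> p" "p \<le> F" "0 \<le> s" "0 \<le> t" "t \<le> 1"
  shows "(2*p*F - p^2 + (1-p)^2 * s) / 4 / ((p/2 + (1-p)*p/2 + (1-p)^2 * t) / 2)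
         \<ge> p * (2 * F - p) / (1 + (1 - p)^2)"
proof (cases "p = 0")
  case True
  then show ?thesis using assms by (simp add: divide_nonneg_nonneg)
next
  case False
  then have pp: "p > 0" using assms by simp
  have p1: "p \<le> 1" using assms by simp
  define n where "n = (2*p*F - p^2 + (1-p)^2 * s) / 4"
  define d where "d = (p/2 + (1-p)*p/2 + (1-p)^2 * t) / 2"
  have dpos: "d > 0" unfolding d_def using pp p1 assms
    by (simp add: add_pos_nonneg mult_nonneg_nonneg)
  have t1: "(1-p)^2 * t \<le> (1-p)^2" using assms by (simp add: mult_left_le)
  have idt: "p/2 + (1-p)*p/2 + (1-p)^2 = (1+(1-p)^2)/2" by (simp add: field_simps power2_eq_square)
  have dle: "d \<le> (1 + (1-p)^2) / 4" unfolding d_def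
  proof -
    have g: "(p/2 + m/2 + r)/2 \<le> (1+q)/4" if "r \<le> q" "p/2 + m/2 + q = (1+q)/2" for q m r :: real using that by (simp add: field_simps)
    show "(p / 2 + (1 - p) * p / 2 + (1 - p)\<^sup>2 * t) / 2 \<le> (1 + (1 - p)\<^sup>2) / 4"
      by (rule g[OF t1 idt])
  qed
  have s1: "(1-p)^2 * s \<ge> 0" using assms by simp
  have ids: "p * (2*F - p) = 2*p*F - p^2" by (simp add: algebra_simps power2_eq_square)
  have nge: "n \<ge> p * (2*F - p) / 4" unfolding n_def ids using s1 by (intro divide_right_mono) auto
  have c0: "p * (2*F - p) \<ge> 0" using assms by simp
  have "p * (2 * F - p) / (1 + (1 - p)^2) = (p * (2*F - p) / 4) / ((1 + (1-p)^2)/4)"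
    using div4[of "p * (2*F - p)" "1 + (1-p)^2"] by simp
  also have "\<dots> \<le> (p * (2*F - p) / 4) / d"
    using dpos dle c0 by (intro divide_left_mono) auto
  also have "\<dots> \<le> n / d" using nge dpos by (intro divide_right_mono) auto
  finally show ?thesis by (simp add: n_def d_def)
qed



lemma S_setD:
  assumes "r \<in> S_set p F"
  obtains s where "density_op r" "density_op s"
    "r = (\<lambda>x y. complex_of_real p * P0 x y + complex_of_real (1 - p) * s x y)"
    "bf P0 r = complex_of_real F"
  using assms unfolding S_set_def proj00 bf_P0 by blast

theorem proposition4:
  fixes p F :: real and \<rho>1 \<rho>2 :: "(bool \<times> bool) op"
  assumes "0 \<le> F" and "F \<le> 1" and "0 \<le> p" and "p \<le> F"
    and "\<rho>1 \<in> S_set p F" and "\<rho>2 \<in> S_set p F"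
  shows "F_out False False \<rho>1 \<rho>2 \<ge> p * (2 * F - p) / (1 + (1 - p)^2)"
proof -
  obtain s1 where d1: "density_op \<rho>1" and ds1: "density_op s1"
    and r1: "\<rho>1 = (\<lambda>x y. complex_of_real p * P0 x y + complex_of_real (1 - p) * s1 x y)"
    and f1: "bf P0 \<rho>1 = complex_of_real F"
    using S_setD[OF assms(5)] by blast
  obtain s2 where d2: "density_op \<rho>2" and ds2: "density_op s2"
    and r2: "\<rho>2 = (\<lambda>x y. complex_of_real p * P0 x y + complex_of_real (1 - p) * s2 x y)"
    and f2: "bf P0 \<rho>2 = complex_of_real F"
    using S_setD[OF assms(6)] by blast
  have tr: "trace_op r = 1" if "density_op r" for r :: "(bool\<times>bool) op"
    using that unfolding density_op_def by blast
  define P where "P = complex_of_real p"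
  define Q where "Q = complex_of_real (1 - p)"
  have g1: "Q * bf s1 P0 = complex_of_real (F - p)"
  proof -
    have "complex_of_real F = bf \<rho>1 P0" using f1 bf_comm by metis
    also have "\<dots> = P * bf P0 P0 + Q * bf s1 P0" unfolding r1 P_def Q_def by (rule bf_lin)
    finally show ?thesis by (simp add: bf_P0P0 P_def)
  qed
  have "bf \<rho>1 \<rho>2 = P * bf P0 \<rho>2 + Q * bf s1 \<rho>2"
    unfolding P_def Q_def by (subst r1) (rule bf_lin)
  also have "bf s1 \<rho>2 = bf \<rho>2 s1" by (rule bf_comm)
  also have "bf \<rho>2 s1 = P * bf P0 s1 + Q * bf s2 s1"
    unfolding P_def Q_def by (subst r2) (rule bf_lin)
  also have "bf P0 s1 = bf s1 P0" by (rule bf_comm)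
  finally have "bf \<rho>1 \<rho>2 = P * complex_of_real F + P * (Q * bf s1 P0) + Q * Q * bf s2 s1"
    using f2 by (simp add: algebra_simps)
  also have "\<dots> = complex_of_real (2*p*F - p^2) + complex_of_real ((1-p)^2) * bf s2 s1"
    unfolding g1 by (simp add: P_def Q_def algebra_simps power2_eq_square)
  finally have N: "Re (bf \<rho>1 \<rho>2) = 2*p*F - p^2 + (1-p)^2 * Re (bf s2 s1)" by simp
  have sN: "0 \<le> Re (bf s2 s1)" using bf_psd density_psd ds1 ds2 by blast
  have pl1: "ptr \<rho>1 = (\<lambda>u v. P * ptr P0 u v + Q * ptr s1 u v)"
    unfolding P_def Q_def by (subst r1) (rule ptr_lin)
  have pl2: "ptr \<rho>2 = (\<lambda>u v. P * ptr P0 u v + Q * ptr s2 u v)"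
    unfolding P_def Q_def by (subst r2) (rule ptr_lin)
  have "bf (ptr \<rho>1) (ptr \<rho>2) = P * bf (ptr P0) (ptr \<rho>2) + Q * bf (ptr s1) (ptr \<rho>2)"
    unfolding pl1 by (rule bf_lin)
  also have "bf (ptr s1) (ptr \<rho>2) = bf (ptr \<rho>2) (ptr s1)" by (rule bf_comm)
  also have "bf (ptr \<rho>2) (ptr s1) = P * bf (ptr P0) (ptr s1) + Q * bf (ptr s2) (ptr s1)"
    unfolding pl2 by (rule bf_lin)
  finally have "bf (ptr \<rho>1) (ptr \<rho>2) = P / 2 + Q * (P / 2 + Q * bf (ptr s2) (ptr s1))"
    by (simp add: bf_ptrP0 trace_ptr tr[OF d2] tr[OF ds1])
  also have "\<dots> = complex_of_real (p/2 + (1-p)*p/2) + complex_of_real ((1-p)^2) * bf (ptr s2) (ptr s1)"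
    by (simp add: P_def Q_def algebra_simps power2_eq_square)
  finally have D: "Re (bf (ptr \<rho>1) (ptr \<rho>2)) = p/2 + (1-p)*p/2 + (1-p)^2 * Re (bf (ptr s2) (ptr s1))"
    by simp
  have ps1: "psd (ptr s1)" and ps2: "psd (ptr s2)" using psd_ptr density_psd ds1 ds2 by blast+
  have t0: "0 \<le> Re (bf (ptr s2) (ptr s1))" using bf_psd ps1 ps2 by blast
  have "0 \<le> Re (bf (\<lambda>a a'. idop a a' - ptr s2 a a') (ptr s1))"
    using bf_psd[OF psd_compl[OF ps2] ps1] trace_ptr tr[OF ds2] by simp
  then have t1: "Re (bf (ptr s2) (ptr s1)) \<le> 1"
    using bf_compl[of "ptr s2" "ptr s1"] trace_ptr[of s1] tr[OF ds1] by simp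
  have FO: "F_out False False \<rho>1 \<rho>2 = (Re (bf \<rho>1 \<rho>2) / 4) / (Re (bf (ptr \<rho>1) (ptr \<rho>2)) / 2)"
    unfolding F_out_def D_formula proj00 N_c by simp
  have FO2: "F_out False False \<rho>1 \<rho>2 = (2*p*F - p^2 + (1-p)^2 * Re (bf s2 s1)) / 4
      / ((p/2 + (1-p)*p/2 + (1-p)^2 * Re (bf (ptr s2) (ptr s1))) / 2)"
    unfolding FO N D ..
  show ?thesis unfolding FO2
    by (rule final_ineq[OF assms(1-4) sN t0 t1])
qed

end
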